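(* Let $G_c=([n],E_c)$ be a connected undirected graph on the vertex set $[n]=\{1,\dots,n\}$, $n\ge 2$, without self-loops, with symmetric adjacency matrix $A_c=[a_{uv}]$ and degrees $d_v=\sum_{u}a_{uv}\ge 1$. For each $v\in[n]$ let $p_v\in(0,1)$ and $q_v=1-p_v$. For each time $k\ge 1$, let $\tilde A_k=[\tilde a^{(k)}_{uv}]$ be a random matrix with $\tilde a^{(k)}_{uv}=a_{uv}$ with probability $p_v$ and $\tilde a^{(k)}_{uv}=0$ with probability $1-p_v$, where all entries are independent of each other (in particular $\tilde a^{(k)}_{uv}$ and $\tilde a^{(k)}_{vu}$ are independent) and the matrices $\tilde A_1,\tilde A_2,\dots$ are i.i.d. Let $\tilde D_k=\mathrm{diag}(\tilde d^{(k)}_v)$ with $\tilde d^{(k)}_v=\sum_u \tilde a^{(k)}_{uv}$, and let $W_k=(\tilde D_k+I)^{-1}(\tilde A_k+I)^T$. Consider the dynamics $\mathbf{x}(k)=W_k\mathbf{x}(k-1)$, $k\ge1$, with deterministic initial condition $\mathbf{x}(0)\in\mathbb{R}^n$. Then almost surely all coordinates $x_i(k)$ converge to a common random limit $x^*$ (the asymptotic consensus value), and $$\mathbb{E}(x^* )=\sum_{i=1}^n \rho\, w_i\, x_i(0),$$ where $$w_i=\frac{p_i(d_i+1)d_i}{p_i(d_i+1)-1+q_i^{d_i+1}},\qquad \rho=\Big(\sum_{i=1}^n w_i\Big)^{-1}.$$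
   Context: The asymptotic consensus value $x^*$ is the random real number such that $x_i(k)\to x^*$ for all $i$ as $k\to\infty$. The matrix $W_k$ is row-stochastic; its $(v,u)$ entry equals $\tilde a^{(k)}_{uv}/(\tilde d^{(k)}_v+1)$ for $u\neq v$ and $1/(\tilde d^{(k)}_v+1)$ for $u=v$. *)

theory Defs
  imports "HOL-Probability.Probability"
begin

definition adj :: "(nat \<Rightarrow> nat \<Rightarrow> bool) \<Rightarrow> nat \<Rightarrow> nat \<Rightarrow> real" where
  "adj E u v = (if E u v then 1 else 0)"

definition deg :: "nat \<Rightarrow> (nat \<Rightarrow> nat \<Rightarrow> bool) \<Rightarrow> nat \<Rightarrow> nat" where
  "deg n E v = card {u \<in> {1..n}. E u v}"

definition connected_graph :: "nat \<Rightarrow> (nat \<Rightarrow> nat \<Rightarrow> bool) \<Rightarrow> bool" where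
  "connected_graph n E \<longleftrightarrow>
     (\<forall>u\<in>{1..n}. \<forall>v\<in>{1..n}. (u, v) \<in> {(x, y). x \<in> {1..n} \<and> y \<in> {1..n} \<and> E x y}\<^sup>*)"

text \<open>random degree tilde d^(k)_v = sum_u tilde a^(k)_uv; At k u v \<omega> is the entry tilde a^(k)_uv\<close>
definition rand_deg :: "nat \<Rightarrow> (nat \<Rightarrow> nat \<Rightarrow> nat \<Rightarrow> 'a \<Rightarrow> real) \<Rightarrow> nat \<Rightarrow> 'a \<Rightarrow> nat \<Rightarrow> real" where
  "rand_deg n At k \<omega> v = (\<Sum>u\<in>{1..n}. At k u v \<omega>)"

text \<open>(v,u) entry of W_k = (tilde D_k + I)^{-1} (tilde A_k + I)^T\<close>
definition Wmat :: "nat \<Rightarrow> (nat \<Rightarrow> nat \<Rightarrow> nat \<Rightarrow> 'a \<Rightarrow> real) \<Rightarrow> nat \<Rightarrow> 'a \<Rightarrow> nat \<Rightarrow> nat \<Rightarrow> real" where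
  "Wmat n At k \<omega> v u = (At k u v \<omega> + (if u = v then 1 else 0)) / (rand_deg n At k \<omega> v + 1)"

fun cstate :: "nat \<Rightarrow> (nat \<Rightarrow> nat \<Rightarrow> nat \<Rightarrow> 'a \<Rightarrow> real) \<Rightarrow> (nat \<Rightarrow> real) \<Rightarrow> nat \<Rightarrow> 'a \<Rightarrow> nat \<Rightarrow> real" where
  "cstate n At x0 0 \<omega> = x0"
| "cstate n At x0 (Suc k) \<omega> = (\<lambda>v. \<Sum>u\<in>{1..n}. Wmat n At (Suc k) \<omega> v u * cstate n At x0 k \<omega> u)"

definition weight :: "nat \<Rightarrow> (nat \<Rightarrow> nat \<Rightarrow> bool) \<Rightarrow> (nat \<Rightarrow> real) \<Rightarrow> nat \<Rightarrow> real" where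
  "weight n E p i = (let d = deg n E i in
     p i * (real d + 1) * real d / (p i * (real d + 1) - 1 + (1 - p i) ^ (d + 1)))"

definition rho :: "nat \<Rightarrow> (nat \<Rightarrow> nat \<Rightarrow> bool) \<Rightarrow> (nat \<Rightarrow> real) \<Rightarrow> real" where
  "rho n E p = inverse (\<Sum>i\<in>{1..n}. weight n E p i)"

end

theory Submission
  imports Defs
begin


lemma cvx_upper:
  fixes w y :: "nat \<Rightarrow> real"
  assumes "finite S" "\<forall>u\<in>S. 0 \<le> w u" "(\<Sum>u\<in>S. w u) = 1" "\<forall>u\<in>S. y u \<le> b"
  shows "(\<Sum>u\<in>S. w u * y u) \<le> b"
proof -
  have "(\<Sum>u\<in>S. w u * y u) \<le> (\<Sum>u\<in>S. w u * b)"
    using assms by (intro sum_mono mult_left_mono) auto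
  also have "\<dots> = b" using assms(3) by (simp add: sum_distrib_right[symmetric])
  finally show ?thesis .
qed

lemma cvx_lower:
  fixes w y :: "nat \<Rightarrow> real"
  assumes "finite S" "\<forall>u\<in>S. 0 \<le> w u" "(\<Sum>u\<in>S. w u) = 1" "\<forall>u\<in>S. a \<le> y u"
  shows "a \<le> (\<Sum>u\<in>S. w u * y u)"
proof -
  have "(\<Sum>u\<in>S. w u * a) \<le> (\<Sum>u\<in>S. w u * y u)"
    using assms by (intro sum_mono mult_left_mono) auto
  moreover have "(\<Sum>u\<in>S. w u * a) = a" using assms(3) by (simp add: sum_distrib_right[symmetric])
  ultimately show ?thesis by simp
qed

lemma cvx_single:
  fixes w y :: "nat \<Rightarrow> real"
  assumes "finite S" "\<forall>u\<in>S. 0 \<le> w u" "(\<Sum>u\<in>S. w u) = 1" "\<forall>u\<in>S. y u \<le> b" "x \<in> S"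
  shows "(\<Sum>u\<in>S. w u * y u) \<le> b - w x * (b - y x)"
proof -
  have "b - (\<Sum>u\<in>S. w u * y u) = (\<Sum>u\<in>S. w u * (b - y u))"
    using assms(3) by (simp add: sum_subtractf right_diff_distrib sum_distrib_right[symmetric])
  also have "\<dots> \<ge> w x * (b - y x)"
    using assms by (intro member_le_sum) auto
  finally show ?thesis by simp
qed

lemma upper_prop:
  fixes W :: "nat \<Rightarrow> nat \<Rightarrow> nat \<Rightarrow> real" and y :: "nat \<Rightarrow> nat \<Rightarrow> real" and R :: "(nat \<times> nat) set"
  assumes fin: "finite S" and Wnn: "\<forall>t<L. \<forall>v\<in>S. \<forall>u\<in>S. 0 \<le> W t v u"
    and Wsum: "\<forall>t<L. \<forall>v\<in>S. (\<Sum>u\<in>S. W t v u) = 1"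
    and Wdiag: "\<forall>t<L. \<forall>v\<in>S. c \<le> W t v v"
    and WR: "\<forall>t<L. \<forall>w v. (w, v) \<in> R \<longrightarrow> c \<le> W t v w"
    and RS: "R \<subseteq> S \<times> S"
    and rec: "\<forall>t<L. \<forall>v\<in>S. y (Suc t) v = (\<Sum>u\<in>S. W t v u * y t u)"
    and yb: "\<forall>u\<in>S. y 0 u \<le> b" and u0: "u0 \<in> S" and c0: "0 \<le> c"
  shows "t \<le> L \<Longrightarrow> (\<forall>v\<in>S. y t v \<le> b) \<and>
     (\<forall>v\<in>S. (\<exists>s\<le>t. (u0, v) \<in> R ^^ s) \<longrightarrow> y t v \<le> b - c ^ t * (b - y 0 u0))"
proof (induction t)
  case 0
  have "\<And>v. (u0, v) \<in> R ^^ 0 \<Longrightarrow> v = u0" by simp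
  then show ?case using yb by auto
next
  case (Suc t)
  then have tL: "t < L" and IH1: "\<forall>v\<in>S. y t v \<le> b"
    and IH2: "\<forall>v\<in>S. (\<exists>s\<le>t. (u0, v) \<in> R ^^ s) \<longrightarrow> y t v \<le> b - c ^ t * (b - y 0 u0)" by auto
  have D: "0 \<le> b - y 0 u0" using yb u0 by auto
  have one: "y (Suc t) v \<le> b - c ^ Suc t * (b - y 0 u0)"
    if "v \<in> S" "x \<in> S" "c \<le> W t v x" "y t x \<le> b - c ^ t * (b - y 0 u0)" for v x
  proof -
    have "y (Suc t) v \<le> b - W t v x * (b - y t x)"
      using rec tL that Wnn Wsum IH1 fin by (auto intro!: cvx_single)
    moreover have "c * (c ^ t * (b - y 0 u0)) \<le> W t v x * (b - y t x)"
      using that c0 D by (intro mult_mono) auto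
    ultimately show ?thesis by simp
  qed
  have A: "\<forall>v\<in>S. y (Suc t) v \<le> b"
    using rec tL Wnn Wsum IH1 fin by (auto intro!: cvx_upper)
  have B: "y (Suc t) v \<le> b - c ^ Suc t * (b - y 0 u0)"
    if v: "v \<in> S" and s: "s \<le> Suc t" "(u0, v) \<in> R ^^ s" for v s
  proof (cases "s \<le> t")
    case True
    then show ?thesis using one[of v v] v s IH2 Wdiag tL by auto
  next
    case False
    then have "s = Suc t" using s by auto
    then have "(u0, v) \<in> R ^^ t O R" using s by simp
    then obtain x where x: "(u0, x) \<in> R ^^ t" "(x, v) \<in> R" by auto
    then have "x \<in> S" using RS by auto
    then show ?thesis using one[of v x] v x IH2 WR tL by auto
  qed
  show ?case using A B by blast
qed


lemma range_contract:
  fixes W :: "nat \<Rightarrow> nat \<Rightarrow> nat \<Rightarrow> real" and y :: "nat \<Rightarrow> nat \<Rightarrow> real" and R :: "(nat \<times> nat) set"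
  assumes fin: "finite S" and ne: "S \<noteq> {}" and Wnn: "\<forall>t<L. \<forall>v\<in>S. \<forall>u\<in>S. 0 \<le> W t v u"
    and Wsum: "\<forall>t<L. \<forall>v\<in>S. (\<Sum>u\<in>S. W t v u) = 1"
    and Wdiag: "\<forall>t<L. \<forall>v\<in>S. c \<le> W t v v"
    and WR: "\<forall>t<L. \<forall>w v. (w, v) \<in> R \<longrightarrow> c \<le> W t v w"
    and RS: "R \<subseteq> S \<times> S"
    and rec: "\<forall>t<L. \<forall>v\<in>S. y (Suc t) v = (\<Sum>u\<in>S. W t v u * y t u)"
    and c0: "0 \<le> c"
    and reach: "\<forall>u\<in>S. \<forall>v\<in>S. \<exists>s\<le>L. (u, v) \<in> R ^^ s"
    and v: "v \<in> S"
  shows "y L v \<le> Max (y 0 ` S) - c ^ L * (Max (y 0 ` S) - Min (y 0 ` S))"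
    and "Min (y 0 ` S) + c ^ L * (Max (y 0 ` S) - Min (y 0 ` S)) \<le> y L v"
proof -
  let ?a = "Min (y 0 ` S)" and ?b = "Max (y 0 ` S)"
  have "?a \<in> y 0 ` S" using fin ne by (intro Min_in) auto
  then obtain u0 where u0: "u0 \<in> S" "y 0 u0 = ?a" by (metis imageE)
  have "?b \<in> y 0 ` S" using fin ne by (intro Max_in) auto
  then obtain u1 where u1: "u1 \<in> S" "y 0 u1 = ?b" by (metis imageE)
  have yb: "\<forall>u\<in>S. y 0 u \<le> ?b" using fin by auto
  have ya: "\<forall>u\<in>S. ?a \<le> y 0 u" using fin by auto
  have "y L v \<le> ?b - c ^ L * (?b - y 0 u0)"
    using upper_prop[OF fin Wnn Wsum Wdiag WR RS rec yb u0(1) c0, of L] reach u0 v by auto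
  then show "y L v \<le> ?b - c ^ L * (?b - ?a)" using u0 by simp
  have rec': "\<forall>t<L. \<forall>v\<in>S. - y (Suc t) v = (\<Sum>u\<in>S. W t v u * - y t u)"
    using rec by (simp add: sum_negf[symmetric])
  have yb': "\<forall>u\<in>S. - y 0 u \<le> - ?a" using ya by auto
  have "- y L v \<le> - ?a - c ^ L * (- ?a - - y 0 u1)"
    using upper_prop[OF fin Wnn Wsum Wdiag WR RS, of "\<lambda>t v. - y t v", OF rec' yb' u1(1) c0, of L] reach u1 v by auto
  then show "?a + c ^ L * (?b - ?a) \<le> y L v" using u1 by (simp add: algebra_simps)
qed



definition Bin :: "nat \<Rightarrow> real \<Rightarrow> (real \<Rightarrow> real) \<Rightarrow> real" where
  "Bin m q f = (\<Sum>i\<le>m. real (m choose i) * q ^ i * (1 - q) ^ (m - i) * f (real i))"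

lemma Bin_0: "Bin 0 q f = f 0" by (simp add: Bin_def)

lemma Bin_Suc: "Bin (Suc m) q f = q * Bin m q (\<lambda>x. f (x + 1)) + (1 - q) * Bin m q f"
proof -
  let ?r = "1 - q"
  let ?S1 = "(\<Sum>i\<le>m. real (m choose i) * q ^ Suc i * ?r ^ (m - i) * f (real (Suc i)))"
  let ?S2 = "(\<Sum>i\<le>m. real (m choose Suc i) * q ^ Suc i * ?r ^ (m - i) * f (real (Suc i)))"
  have h0: "Bin (Suc m) q f = ?r ^ Suc m * f 0 + (\<Sum>i\<le>m. real (Suc m choose Suc i) * q ^ Suc i * ?r ^ (m - i) * f (real (Suc i)))"
    unfolding Bin_def by (subst sum.atMost_Suc_shift) simp
  have h1: "(\<Sum>i\<le>m. real (Suc m choose Suc i) * q ^ Suc i * ?r ^ (m - i) * f (real (Suc i))) = ?S1 + ?S2"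
    by (simp add: sum.distrib[symmetric] algebra_simps)
  have h2: "?S1 = q * Bin m q (\<lambda>x. f (x + 1))"
    unfolding Bin_def by (simp add: sum_distrib_left algebra_simps)
  have h3: "?r ^ Suc m * f 0 + ?S2 = ?r * Bin m q f"
  proof -
    have "?r * Bin m q f = (\<Sum>i\<le>m. real (m choose i) * q ^ i * ?r ^ (Suc m - i) * f (real i))"
      unfolding Bin_def by (simp add: sum_distrib_left algebra_simps Suc_diff_le)
    also have "\<dots> = (\<Sum>i\<le>Suc m. real (m choose i) * q ^ i * ?r ^ (Suc m - i) * f (real i))"
      by simp
    also have "\<dots> = ?r ^ Suc m * f 0 + ?S2"
      by (subst sum.atMost_Suc_shift) simp
    finally show ?thesis by simp
  qed
  show ?thesis using h0 h1 h2 h3 by simp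
qed

lemma Bin_g1:
  assumes "0 < q"
  shows "Bin m q (\<lambda>x. 1 / (x + 1)) = (1 - (1 - q) ^ (m + 1)) / ((real m + 1) * q)"
proof -
  let ?r = "1 - q"
  have c: "real (m choose i) * (real m + 1) = real (Suc m choose Suc i) * (real i + 1)" for i
  proof -
    have "real (Suc m choose Suc i) * real (Suc i) = real (Suc m) * real (m choose i)"
      using Suc_times_binomial_eq[of m i] by (metis of_nat_mult)
    then show ?thesis by (simp add: algebra_simps)
  qed
  have t: "real (m choose i) * q ^ i * ?r ^ (m - i) * (1 / (real i + 1)) = real (Suc m choose Suc i) * q ^ i * ?r ^ (m - i) / (real m + 1)" for i
  proof -
    have nz: "real i + 1 \<noteq> 0" "real m + 1 \<noteq> 0" by (simp_all add: add_nonneg_eq_0_iff)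
    let ?x = "q ^ i * ?r ^ (m - i)"
    have e: "(real (m choose i) * ?x) * (real m + 1) = (real (Suc m choose Suc i) * ?x) * (real i + 1)"
      using c[of i] by (metis mult.commute mult.left_commute)
    have "real (m choose i) * q ^ i * ?r ^ (m - i) * (1 / (real i + 1)) = (real (m choose i) * ?x) / (real i + 1)"
      by (simp add: mult.assoc)
    also have "\<dots> = (real (Suc m choose Suc i) * ?x) / (real m + 1)"
      using nz e by (simp add: frac_eq_eq)
    finally show ?thesis by (simp add: mult.assoc)
  qed
  let ?S = "(\<Sum>i\<le>m. real (Suc m choose Suc i) * q ^ i * ?r ^ (m - i))"
  have B: "Bin m q (\<lambda>x. 1 / (x + 1)) = ?S / (real m + 1)"
    unfolding Bin_def sum_divide_distrib
    by (intro sum.cong refl t)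
  have "?S * q = (\<Sum>i\<le>m. real (Suc m choose Suc i) * q ^ Suc i * ?r ^ (Suc m - Suc i))"
    by (simp add: sum_distrib_right sum_distrib_left algebra_simps del: binomial_Suc_Suc)
  also have "\<dots> = (q + ?r) ^ Suc m - ?r ^ Suc m"
    unfolding binomial_ring[of q ?r "Suc m"] by (subst sum.atMost_Suc_shift) (simp del: binomial_Suc_Suc)
  finally have "?S * q = 1 - ?r ^ Suc m" by simp
  then have S: "?S = (1 - ?r ^ Suc m) / q"
    using assms by (simp add: field_simps del: binomial_Suc_Suc)
  have "Bin m q (\<lambda>x. 1 / (x + 1)) = ((1 - ?r ^ Suc m) / q) / (real m + 1)"
    unfolding B S ..
  then show ?thesis by (simp add: divide_divide_eq_left mult.commute)
qed



locale cons = prob_space M for M :: "'a measure" +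
  fixes n :: nat and E :: "nat \<Rightarrow> nat \<Rightarrow> bool" and p :: "nat \<Rightarrow> real"
    and At :: "nat \<Rightarrow> nat \<Rightarrow> nat \<Rightarrow> 'a \<Rightarrow> real" and x0 :: "nat \<Rightarrow> real"
  assumes n2: "n \<ge> 2"
    and sym: "\<forall>u\<in>{1..n}. \<forall>v\<in>{1..n}. E u v = E v u"
    and noloop: "\<forall>v. \<not> E v v"
    and conn: "connected_graph n E"
    and degpos: "\<forall>v\<in>{1..n}. deg n E v \<ge> 1"
    and prange: "\<forall>v\<in>{1..n}. 0 < p v \<and> p v < 1"
    and indep: "indep_vars (\<lambda>_. borel) (\<lambda>(k, u, v). At k u v)
                  {(k, u, v). k \<ge> 1 \<and> u \<in> {1..n} \<and> v \<in> {1..n}}"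
    and dist_edge: "\<forall>k\<ge>1. \<forall>u\<in>{1..n}. \<forall>v\<in>{1..n}. E u v \<longrightarrow>
                  measure M {\<omega> \<in> space M. At k u v \<omega> = adj E u v} = p v \<and>
                  measure M {\<omega> \<in> space M. At k u v \<omega> = 0} = 1 - p v"
    and dist_nonedge: "\<forall>k\<ge>1. \<forall>u\<in>{1..n}. \<forall>v\<in>{1..n}. \<not> E u v \<longrightarrow>
                  measure M {\<omega> \<in> space M. At k u v \<omega> = 0} = 1"
begin

abbreviation "N \<equiv> {1..n}"
abbreviation "XX \<equiv> (\<lambda>(k, u, v). At k u v)"
abbreviation "II \<equiv> {(k, u, v). k \<ge> 1 \<and> u \<in> {1..n} \<and> v \<in> {1..n}}"

lemma At_meas[measurable]:
  assumes "k \<ge> 1" "u \<in> N" "v \<in> N" shows "At k u v \<in> borel_measurable M"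
proof -
  have "XX (k,u,v) \<in> borel_measurable M"
    using indep assms unfolding indep_vars_def by auto
  then show ?thesis by simp
qed

definition "Gd = {\<omega>. \<forall>k\<ge>1. \<forall>u\<in>N. \<forall>v\<in>N. (At k u v \<omega> = 0 \<or> At k u v \<omega> = 1) \<and> (\<not> E u v \<longrightarrow> At k u v \<omega> = 0)}"

lemma AE_entry:
  assumes "k \<ge> 1" "u \<in> N" "v \<in> N"
  shows "AE \<omega> in M. (At k u v \<omega> = 0 \<or> At k u v \<omega> = 1) \<and> (\<not> E u v \<longrightarrow> At k u v \<omega> = 0)"
proof (cases "E u v")
  case True
  let ?S1 = "{\<omega> \<in> space M. At k u v \<omega> = 1}" and ?S0 = "{\<omega> \<in> space M. At k u v \<omega> = 0}"
  have m: "?S1 \<in> events" "?S0 \<in> events" using assms by measurable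
  have "prob ?S1 = p v" "prob ?S0 = 1 - p v"
    using dist_edge assms True by (auto simp: adj_def)
  moreover have "prob (?S1 \<union> ?S0) = prob ?S1 + prob ?S0"
    using m by (intro finite_measure_Union) auto
  ultimately have "prob (?S1 \<union> ?S0) = 1" by simp
  then have "AE \<omega> in M. \<omega> \<in> ?S1 \<union> ?S0" by (rule AE_prob_1)
  then show ?thesis by (rule eventually_mono) (use True in auto)
next
  case False
  have "prob {\<omega> \<in> space M. At k u v \<omega> = 0} = 1" using dist_nonedge assms False by auto
  then have "AE \<omega> in M. \<omega> \<in> {\<omega> \<in> space M. At k u v \<omega> = 0}" by (rule AE_prob_1)
  then show ?thesis by (rule eventually_mono) auto
qed

lemma AE_Gd: "AE \<omega> in M. \<omega> \<in> Gd"
proof -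
  have "AE \<omega> in M. \<forall>k. k \<ge> 1 \<longrightarrow> (\<forall>u\<in>N. \<forall>v\<in>N. (At k u v \<omega> = 0 \<or> At k u v \<omega> = 1) \<and> (\<not> E u v \<longrightarrow> At k u v \<omega> = 0))"
  proof (rule AE_all_countable[THEN iffD2], intro allI)
    fix k :: nat
    show "AE \<omega> in M. k \<ge> 1 \<longrightarrow> (\<forall>u\<in>N. \<forall>v\<in>N. (At k u v \<omega> = 0 \<or> At k u v \<omega> = 1) \<and> (\<not> E u v \<longrightarrow> At k u v \<omega> = 0))"
    proof (cases "k \<ge> 1")
      case True
      have "AE \<omega> in M. (\<forall>u\<in>N. \<forall>v\<in>N. (At k u v \<omega> = 0 \<or> At k u v \<omega> = 1) \<and> (\<not> E u v \<longrightarrow> At k u v \<omega> = 0))"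
        using True by (intro eventually_ball_finite ballI AE_entry) auto
      then show ?thesis by (rule eventually_mono) auto
    qed simp
  qed
  then show ?thesis unfolding Gd_def by (rule eventually_mono) auto
qed


definition "cs k \<omega> = cstate n At x0 k \<omega>"
definition "Mx k \<omega> = Max ((\<lambda>i. cs k \<omega> i) ` N)"
definition "Mn k \<omega> = Min ((\<lambda>i. cs k \<omega> i) ` N)"
definition "V k \<omega> = Mx k \<omega> - Mn k \<omega>"

lemma cs_0: "cs 0 \<omega> = x0" by (simp add: cs_def)
lemma cs_Suc: "cs (Suc k) \<omega> v = (\<Sum>u\<in>N. Wmat n At (Suc k) \<omega> v u * cs k \<omega> u)"
  by (simp add: cs_def)

lemma N_ne: "N \<noteq> {}" using n2 by auto
lemma one_N: "1 \<in> N" using n2 by auto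

lemma GdD: "\<omega> \<in> Gd \<Longrightarrow> k \<ge> 1 \<Longrightarrow> u \<in> N \<Longrightarrow> v \<in> N \<Longrightarrow>
   (At k u v \<omega> = 0 \<or> At k u v \<omega> = 1) \<and> (\<not> E u v \<longrightarrow> At k u v \<omega> = 0)"
  unfolding Gd_def by blast

lemma rd_bounds:
  assumes "\<omega> \<in> Gd" "k \<ge> 1" "v \<in> N"
  shows "0 \<le> rand_deg n At k \<omega> v" "rand_deg n At k \<omega> v \<le> n"
proof -
  have b: "\<And>u. u \<in> N \<Longrightarrow> 0 \<le> At k u v \<omega> \<and> At k u v \<omega> \<le> 1"
    using GdD[OF assms(1,2) _ assms(3)] by fastforce
  show "0 \<le> rand_deg n At k \<omega> v" unfolding rand_deg_def using b by (intro sum_nonneg) auto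
  have "rand_deg n At k \<omega> v \<le> (\<Sum>u\<in>N. 1)" unfolding rand_deg_def using b by (intro sum_mono) auto
  then show "rand_deg n At k \<omega> v \<le> n" by simp
qed

lemma At_nn: "\<omega> \<in> Gd \<Longrightarrow> k \<ge> 1 \<Longrightarrow> u \<in> N \<Longrightarrow> v \<in> N \<Longrightarrow> 0 \<le> At k u v \<omega>"
  using GdD by fastforce

lemma At_diag: "\<omega> \<in> Gd \<Longrightarrow> k \<ge> 1 \<Longrightarrow> v \<in> N \<Longrightarrow> At k v v \<omega> = 0"
  using GdD noloop by blast

lemma W_nn:
  assumes "\<omega> \<in> Gd" "k \<ge> 1" "v \<in> N" "u \<in> N"
  shows "0 \<le> Wmat n At k \<omega> v u"
  unfolding Wmat_def using rd_bounds[OF assms(1-3)] At_nn[OF assms(1,2,4,3)] by auto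

lemma W_lb:
  assumes "\<omega> \<in> Gd" "k \<ge> 1" "v \<in> N" "u \<in> N"
  shows "(At k u v \<omega> + (if u = v then 1 else 0)) / (real n + 1) \<le> Wmat n At k \<omega> v u"
  unfolding Wmat_def using rd_bounds[OF assms(1-3)] At_nn[OF assms(1,2,4,3)]
  by (intro divide_left_mono) auto

lemma W_sum:
  assumes "\<omega> \<in> Gd" "k \<ge> 1" "v \<in> N"
  shows "(\<Sum>u\<in>N. Wmat n At k \<omega> v u) = 1"
proof -
  have "(\<Sum>u\<in>N. At k u v \<omega> + (if u = v then 1 else 0)) = rand_deg n At k \<omega> v + 1"
    using assms(3) by (simp add: sum.distrib rand_deg_def)
  moreover have "rand_deg n At k \<omega> v + 1 > 0" using rd_bounds[OF assms] by auto
  ultimately show ?thesis unfolding Wmat_def by (simp add: sum_divide_distrib[symmetric])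
qed

lemma cs_bounds:
  assumes "\<omega> \<in> Gd" "i \<in> N"
  shows "Min (x0 ` N) \<le> cs k \<omega> i \<and> cs k \<omega> i \<le> Max (x0 ` N)"
  using assms(2)
proof (induction k arbitrary: i)
  case 0 then show ?case by (simp add: cs_0)
next
  case (Suc k)
  have "Min (x0 ` N) \<le> (\<Sum>u\<in>N. Wmat n At (Suc k) \<omega> i u * cs k \<omega> u)"
    using Suc W_nn W_sum assms(1) by (intro cvx_lower) auto
  moreover have "(\<Sum>u\<in>N. Wmat n At (Suc k) \<omega> i u * cs k \<omega> u) \<le> Max (x0 ` N)"
    using Suc W_nn W_sum assms(1) by (intro cvx_upper) auto
  ultimately show ?case by (simp add: cs_Suc)
qed

lemma cs_abs_bound:
  assumes "\<omega> \<in> Gd" "i \<in> N"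
  shows "\<bar>cs k \<omega> i\<bar> \<le> (\<Sum>j\<in>N. \<bar>x0 j\<bar>)"
proof -
  obtain a where a: "a \<in> N" "x0 a = Min (x0 ` N)"
    using Min_in[of "x0 ` N"] N_ne by (metis finite_atLeastAtMost finite_imageI image_iff image_is_empty)
  obtain b where b: "b \<in> N" "x0 b = Max (x0 ` N)"
    using Max_in[of "x0 ` N"] N_ne by (metis finite_atLeastAtMost finite_imageI image_iff image_is_empty)
  have "\<bar>x0 a\<bar> \<le> (\<Sum>j\<in>N. \<bar>x0 j\<bar>)" "\<bar>x0 b\<bar> \<le> (\<Sum>j\<in>N. \<bar>x0 j\<bar>)"
    using a(1) b(1) by (auto intro!: member_le_sum simp del: atLeastAtMost_iff)
  then show ?thesis using cs_bounds[OF assms, of k] a b by auto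
qed

lemma Mn_le_cs: "i \<in> N \<Longrightarrow> Mn k \<omega> \<le> cs k \<omega> i" unfolding Mn_def by auto
lemma cs_le_Mx: "i \<in> N \<Longrightarrow> cs k \<omega> i \<le> Mx k \<omega>" unfolding Mx_def by auto
lemma V_nn: "0 \<le> V k \<omega>" unfolding V_def using Mn_le_cs[OF one_N] cs_le_Mx[OF one_N] by (meson order_trans diff_ge_0_iff_ge)

lemma Mx_mono:
  assumes "\<omega> \<in> Gd" shows "Mx (Suc k) \<omega> \<le> Mx k \<omega>"
proof -
  have "\<forall>i\<in>N. cs (Suc k) \<omega> i \<le> Mx k \<omega>"
    using W_nn W_sum assms cs_le_Mx by (auto simp: cs_Suc intro!: cvx_upper)
  then show ?thesis unfolding Mx_def[of "Suc k"] using N_ne by auto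
qed

lemma Mn_mono:
  assumes "\<omega> \<in> Gd" shows "Mn k \<omega> \<le> Mn (Suc k) \<omega>"
proof -
  have "\<forall>i\<in>N. Mn k \<omega> \<le> cs (Suc k) \<omega> i"
    using W_nn W_sum assms Mn_le_cs by (auto simp: cs_Suc intro!: cvx_lower)
  then show ?thesis unfolding Mn_def[of "Suc k"] using N_ne by auto
qed

lemma V_mono: "\<omega> \<in> Gd \<Longrightarrow> V (Suc k) \<omega> \<le> V k \<omega>"
  using Mx_mono Mn_mono unfolding V_def by (meson diff_mono)

lemma V_antimono: assumes "\<omega> \<in> Gd" "k \<le> k'" shows "V k' \<omega> \<le> V k \<omega>"
  using assms(2) by (induction rule: dec_induct) (auto intro: order_trans V_mono[OF assms(1)])


definition "RR = {(x, y). x \<in> N \<and> y \<in> N \<and> E x y}"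

lemma finite_bound:
  assumes "finite A" "\<forall>x\<in>A. \<exists>s::nat. P x s"
  shows "\<exists>L. \<forall>x\<in>A. \<exists>s\<le>L. P x s"
  using assms
proof (induction A rule: finite_induct)
  case empty then show ?case by auto
next
  case (insert a A)
  then obtain L where L: "\<forall>x\<in>A. \<exists>s\<le>L. P x s" by auto
  obtain s0 where "P a s0" using insert by auto
  then have "\<forall>x\<in>insert a A. \<exists>s\<le>max L s0. P x s"
    using L by (metis insert_iff max.coboundedI1 max.cobounded2 order_trans)
  then show ?case by blast
qed

lemma exL: "\<exists>L. \<forall>u\<in>N. \<forall>v\<in>N. \<exists>s\<le>L. (u, v) \<in> RR ^^ s"
proof -
  have "\<forall>x\<in>N \<times> N. \<exists>s. (fst x, snd x) \<in> RR ^^ s"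
    using conn unfolding connected_graph_def RR_def by (auto simp: rtrancl_power)
  from finite_bound[OF _ this] obtain L where "\<forall>x\<in>N \<times> N. \<exists>s\<le>L. (fst x, snd x) \<in> RR ^^ s" by auto
  then show ?thesis by auto
qed

definition "Lw = Suc (SOME L. \<forall>u\<in>N. \<forall>v\<in>N. \<exists>s\<le>L. (u, v) \<in> RR ^^ s)"

lemma Lw_reach: "\<forall>u\<in>N. \<forall>v\<in>N. \<exists>s\<le>Lw. (u, v) \<in> RR ^^ s"
proof -
  have "\<forall>u\<in>N. \<forall>v\<in>N. \<exists>s\<le>(SOME L. \<forall>u\<in>N. \<forall>v\<in>N. \<exists>s\<le>L. (u, v) \<in> RR ^^ s). (u, v) \<in> RR ^^ s"
    using someI_ex[OF exL] .
  then show ?thesis unfolding Lw_def by (meson le_SucI)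
qed

lemma Lw_pos: "Lw \<ge> 1" unfolding Lw_def by simp

definition "Bw s = {\<omega>. \<forall>j\<in>{s<..s+Lw}. \<forall>u\<in>N. \<forall>v\<in>N. At j u v \<omega> = adj E u v}"
definition "cc = 1 / (real n + 1)"

lemma window_contract:
  assumes G: "\<omega> \<in> Gd" and B: "\<omega> \<in> Bw s"
  shows "V (s + Lw) \<omega> \<le> (1 - 2 * cc ^ Lw) * V s \<omega>"
proof -
  define W where "W t v u = Wmat n At (Suc (s + t)) \<omega> v u" for t v u
  define y where "y t = cs (s + t) \<omega>" for t
  have fin: "finite N" by simp
  have Wnn: "\<forall>t<Lw. \<forall>v\<in>N. \<forall>u\<in>N. 0 \<le> W t v u" using W_nn G unfolding W_def by auto
  have Wsum: "\<forall>t<Lw. \<forall>v\<in>N. (\<Sum>u\<in>N. W t v u) = 1" using W_sum G unfolding W_def by auto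
  have Wdiag: "\<forall>t<Lw. \<forall>v\<in>N. cc \<le> W t v v"
  proof (intro allI impI ballI)
    fix t v assume "t < Lw" "v \<in> N"
    then have "(At (Suc (s + t)) v v \<omega> + 1) / (real n + 1) \<le> W t v v"
      using W_lb[OF G, of "Suc (s+t)" v v] unfolding W_def by auto
    moreover have "At (Suc (s + t)) v v \<omega> = 0" using At_diag[OF G] \<open>v \<in> N\<close> by auto
    ultimately show "cc \<le> W t v v" unfolding cc_def by simp
  qed
  have WR: "\<forall>t<Lw. \<forall>w v. (w, v) \<in> RR \<longrightarrow> cc \<le> W t v w"
  proof (intro allI impI)
    fix t w v assume t: "t < Lw" and wv: "(w, v) \<in> RR"
    then have wv': "w \<in> N" "v \<in> N" "E w v" "w \<noteq> v" using noloop unfolding RR_def by auto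
    have "(At (Suc (s + t)) w v \<omega> + (if w = v then 1 else 0)) / (real n + 1) \<le> W t v w"
      using W_lb[OF G, of "Suc (s+t)" v w] wv' unfolding W_def by auto
    moreover have "At (Suc (s + t)) w v \<omega> = 1"
      using B t wv' unfolding Bw_def adj_def by auto
    ultimately show "cc \<le> W t v w" unfolding cc_def using wv' by simp
  qed
  have RS: "RR \<subseteq> N \<times> N" unfolding RR_def by auto
  have rec: "\<forall>t<Lw. \<forall>v\<in>N. y (Suc t) v = (\<Sum>u\<in>N. W t v u * y t u)"
    unfolding y_def W_def by (simp add: cs_Suc)
  have c0: "0 \<le> cc" unfolding cc_def by simp
  note rc = range_contract[OF fin N_ne Wnn Wsum Wdiag WR RS rec c0 Lw_reach]
  have y0: "y 0 = cs s \<omega>" unfolding y_def by simp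
  have up: "\<forall>v\<in>N. cs (s + Lw) \<omega> v \<le> Mx s \<omega> - cc ^ Lw * (Mx s \<omega> - Mn s \<omega>)"
    using rc(1) unfolding y0 Mx_def Mn_def by (auto simp: y_def)
  have lo: "\<forall>v\<in>N. Mn s \<omega> + cc ^ Lw * (Mx s \<omega> - Mn s \<omega>) \<le> cs (s + Lw) \<omega> v"
    using rc(2) unfolding y0 Mx_def Mn_def by (auto simp: y_def)
  have "Mx (s + Lw) \<omega> \<le> Mx s \<omega> - cc ^ Lw * (Mx s \<omega> - Mn s \<omega>)"
    using up N_ne unfolding Mx_def[of "s + Lw"] by auto
  moreover have "Mn s \<omega> + cc ^ Lw * (Mx s \<omega> - Mn s \<omega>) \<le> Mn (s + Lw) \<omega>"
    using lo N_ne unfolding Mn_def[of "s + Lw"] by auto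
  ultimately show ?thesis unfolding V_def by (simp add: algebra_simps)
qed

end



context cons begin

definition "lift f = (\<lambda>k u v (_::unit). f (k, u, v))"
definition "rr K \<omega> = restrict (\<lambda>i. XX i \<omega>) K"
definition "idx k = {(j, u, v). 1 \<le> j \<and> j \<le> k \<and> u \<in> N \<and> v \<in> N}"

lemma cstate_cong:
  assumes "\<forall>j\<in>{1..k}. \<forall>u\<in>N. \<forall>v\<in>N. At' j u v \<omega>' = At'' j u v \<omega>''"
  shows "\<forall>i\<in>N. cstate n At' x0 k \<omega>' i = cstate n At'' x0 k \<omega>'' i"
  using assms
proof (induction k)
  case 0 then show ?case by simp
next
  case (Suc k)
  then have IH: "\<forall>i\<in>N. cstate n At' x0 k \<omega>' i = cstate n At'' x0 k \<omega>'' i" by auto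
  have W: "Wmat n At' (Suc k) \<omega>' v u = Wmat n At'' (Suc k) \<omega>'' v u" if "u \<in> N" "v \<in> N" for u v
    using Suc.prems that unfolding Wmat_def rand_deg_def by (auto intro!: sum.cong)
  show ?case using IH W by (auto intro!: sum.cong)
qed

lemma cs_rr:
  assumes "idx k \<subseteq> K" "i \<in> N"
  shows "cs k \<omega> i = cstate n (lift (rr K \<omega>)) x0 k () i"
  unfolding cs_def
  using cstate_cong[of k At \<omega> "lift (rr K \<omega>)" "()"] assms
  by (auto simp: lift_def rr_def idx_def subset_iff)

lemma cstate_lift_meas:
  assumes "idx k \<subseteq> K" "i \<in> N"
  shows "(\<lambda>f. cstate n (lift f) x0 k () i) \<in> borel_measurable (PiM K (\<lambda>_. borel))"
  using assms
proof (induction k arbitrary: i)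
  case 0 then show ?case by simp
next
  case (Suc k)
  have sub: "idx k \<subseteq> K" using Suc.prems unfolding idx_def by auto
  have inK: "(Suc k, u, v) \<in> K" if "u \<in> N" "v \<in> N" for u v
    using Suc.prems that unfolding idx_def by auto
  have W: "(\<lambda>f. Wmat n (lift f) (Suc k) () i u) \<in> borel_measurable (PiM K (\<lambda>_. borel))" if "u \<in> N" for u
    unfolding Wmat_def rand_deg_def lift_def
    using inK that Suc.prems by measurable
  show ?case
    using Suc.IH[OF sub] W by (simp del: atLeastAtMost_iff) measurable
qed

lemma rr_meas[measurable]: "K \<subseteq> II \<Longrightarrow> rr K \<in> measurable M (PiM K (\<lambda>_. borel))"
  unfolding rr_def using indep unfolding indep_vars_def by (auto intro!: measurable_restrict)

lemma idx_II: "idx k \<subseteq> II" unfolding idx_def by auto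

lemma cs_meas[measurable]: "i \<in> N \<Longrightarrow> (\<lambda>\<omega>. cs k \<omega> i) \<in> borel_measurable M"
proof -
  assume i: "i \<in> N"
  have "(\<lambda>\<omega>. cstate n (lift (rr (idx k) \<omega>)) x0 k () i) \<in> borel_measurable M"
    using measurable_comp[OF rr_meas[OF idx_II] cstate_lift_meas[OF order.refl i, of k]] by (simp add: comp_def)
  then show ?thesis using cs_rr[OF order.refl i] by simp
qed

lemma indep_fg:
  assumes "A \<inter> B = {}" "A \<subseteq> II" "B \<subseteq> II"
    and F: "F \<in> borel_measurable (PiM A (\<lambda>_. borel))" and G: "G \<in> borel_measurable (PiM B (\<lambda>_. borel))"
  shows "indep_var borel (\<lambda>\<omega>. F (rr A \<omega>)) borel (\<lambda>\<omega>. G (rr B \<omega>))"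
  using indep_var_compose[OF indep_var_restrict[OF indep assms(1-3)] F G]
  by (simp add: comp_def rr_def)

lemma int_bound:
  fixes f :: "'a \<Rightarrow> real"
  assumes "f \<in> borel_measurable M" "AE \<omega> in M. \<bar>f \<omega>\<bar> \<le> B"
  shows "integrable M f"
proof -
  have "integrable M (\<lambda>_. B)" by simp
  moreover have "AE \<omega> in M. norm (f \<omega>) \<le> norm B"
    using assms(2) by (rule eventually_mono) auto
  ultimately show ?thesis using Bochner_Integration.integrable_bound assms(1) by blast
qed

end



context cons begin

definition "GV k f = Max ((\<lambda>i. cstate n (lift f) x0 k () i) ` N) - Min ((\<lambda>i. cstate n (lift f) x0 k () i) ` N)"

lemma GV_meas: "GV k \<in> borel_measurable (PiM (idx k) (\<lambda>_. borel))"
  unfolding GV_def using cstate_lift_meas[OF order.refl] by measurable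

lemma V_GV: "V k \<omega> = GV k (rr (idx k) \<omega>)"
proof -
  have "(\<lambda>i. cs k \<omega> i) ` N = (\<lambda>i. cstate n (lift (rr (idx k) \<omega>)) x0 k () i) ` N"
    using cs_rr[OF order.refl] by (auto intro!: image_cong)
  then show ?thesis unfolding V_def Mx_def Mn_def GV_def by simp
qed

lemma V_meas[measurable]: "V k \<in> borel_measurable M"
  unfolding V_def Mx_def Mn_def by measurable

lemma V_bound: "\<omega> \<in> Gd \<Longrightarrow> V k \<omega> \<le> 2 * (\<Sum>j\<in>N. \<bar>x0 j\<bar>)"
proof -
  assume G: "\<omega> \<in> Gd"
  have "Mx k \<omega> \<in> (\<lambda>i. cs k \<omega> i) ` N" unfolding Mx_def using N_ne by (intro Max_in) auto
  then obtain i where i: "i \<in> N" "Mx k \<omega> = cs k \<omega> i" by auto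
  have "Mn k \<omega> \<in> (\<lambda>i. cs k \<omega> i) ` N" unfolding Mn_def using N_ne by (intro Min_in) auto
  then obtain j where j: "j \<in> N" "Mn k \<omega> = cs k \<omega> j" by auto
  show ?thesis unfolding V_def using i j cs_abs_bound[OF G i(1), of k] cs_abs_bound[OF G j(1), of k] by linarith
qed

lemma V_int: "integrable M (V k)"
proof (rule int_bound[where B="2 * (\<Sum>j\<in>N. \<bar>x0 j\<bar>)"])
  show "V k \<in> borel_measurable M" by simp
  show "AE \<omega> in M. \<bar>V k \<omega>\<bar> \<le> 2 * (\<Sum>j\<in>N. \<bar>x0 j\<bar>)"
    using AE_Gd by (rule eventually_mono) (use V_bound in \<open>auto simp: abs_of_nonneg[OF V_nn]\<close>)
qed

definition "JJ s = {s<..s+Lw} \<times> N \<times> N"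
definition "aa x = adj E (fst (snd x)) (snd (snd x))"
definition "HB s f = (\<Prod>x\<in>JJ s. if f x = aa x then 1 else (0::real))"

lemma JJ_II: "JJ s \<subseteq> II" unfolding JJ_def by auto
lemma JJ_fin: "finite (JJ s)" unfolding JJ_def by auto
lemma JJ_card: "card (JJ s) = Lw * n * n" unfolding JJ_def by (simp add: card_cartesian_product)

lemma HB_meas: "HB s \<in> borel_measurable (PiM (JJ s) (\<lambda>_. borel))"
  unfolding HB_def using JJ_fin by measurable

lemma HB_ind: "HB s (rr (JJ s) \<omega>) = (if \<omega> \<in> Bw s then 1 else 0)"
proof -
  have "HB s (rr (JJ s) \<omega>) = (\<Prod>x\<in>JJ s. if XX x \<omega> = aa x then 1 else (0::real))"
    unfolding HB_def rr_def by (auto intro!: prod.cong)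
  also have "\<dots> = (if \<forall>x\<in>JJ s. XX x \<omega> = aa x then 1 else 0)"
    using JJ_fin by (induction rule: finite_induct) auto
  also have "(\<forall>x\<in>JJ s. XX x \<omega> = aa x) \<longleftrightarrow> \<omega> \<in> Bw s"
    unfolding JJ_def Bw_def aa_def by auto
  finally show ?thesis by simp
qed

definition "pmin = Min (p ` N)"

lemma pmin: "0 < pmin" "pmin \<le> 1" "\<And>v. v \<in> N \<Longrightarrow> pmin \<le> p v"
proof -
  show "0 < pmin" unfolding pmin_def using prange N_ne by (auto simp: Min_gr_iff)
  show "\<And>v. v \<in> N \<Longrightarrow> pmin \<le> p v" unfolding pmin_def by auto
  then show "pmin \<le> 1" using prange one_N by (meson less_eq_real_def order_trans)
qed

lemma entry_prob:
  assumes "x \<in> II"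
  shows "pmin \<le> (\<integral>\<omega>. (if XX x \<omega> = aa x then 1 else 0) \<partial>M)"
proof -
  obtain k u v where x: "x = (k, u, v)" "k \<ge> 1" "u \<in> N" "v \<in> N" using assms by auto
  have "(\<integral>\<omega>. (if XX x \<omega> = aa x then 1 else 0) \<partial>M) = (\<integral>\<omega>. indicator {\<omega> \<in> space M. At k u v \<omega> = aa x} \<omega> \<partial>M)"
    using x by (intro Bochner_Integration.integral_cong) (auto simp: indicator_def)
  also have "\<dots> = prob {\<omega> \<in> space M. At k u v \<omega> = aa x}"
  proof -
    have "{\<omega> \<in> space M. At k u v \<omega> = aa x} \<in> events" using x by measurable
    then show ?thesis by simp
  qed
  finally have eq: "(\<integral>\<omega>. (if XX x \<omega> = aa x then 1 else 0) \<partial>M) = prob {\<omega> \<in> space M. At k u v \<omega> = aa x}" .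
  show ?thesis
  proof (cases "E u v")
    case True
    then show ?thesis using eq dist_edge x pmin(3)[of v] by (auto simp: aa_def)
  next
    case False
    then show ?thesis using eq dist_nonedge x pmin(2) by (auto simp: aa_def adj_def)
  qed
qed

definition "eta = pmin ^ (Lw * n * n)"

lemma HB_int: "eta \<le> (\<integral>\<omega>. HB s (rr (JJ s) \<omega>) \<partial>M)"
proof -
  define Y where "Y x \<omega> = (if XX x \<omega> = aa x then 1 else (0::real))" for x \<omega>
  have iv: "indep_vars (\<lambda>_. borel) Y (JJ s)"
    unfolding Y_def
    using indep_vars_compose2[OF indep_vars_subset[OF indep JJ_II], where Y="\<lambda>x y. if y = aa x then 1 else (0::real)" and N="\<lambda>_. borel"]
    by (simp add: split_beta')
  have Yint: "integrable M (Y x)" if "x \<in> JJ s" for x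
  proof -
    have "Y x \<in> borel_measurable M"
      using iv that unfolding indep_vars_def by auto
    then show ?thesis by (rule int_bound[where B=1]) (auto simp: Y_def)
  qed
  have "(\<integral>\<omega>. HB s (rr (JJ s) \<omega>) \<partial>M) = (\<integral>\<omega>. (\<Prod>x\<in>JJ s. Y x \<omega>) \<partial>M)"
    unfolding HB_def rr_def Y_def by (intro Bochner_Integration.integral_cong prod.cong) auto
  also have "\<dots> = (\<Prod>x\<in>JJ s. \<integral>\<omega>. Y x \<omega> \<partial>M)"
    by (rule indep_vars_lebesgue_integral[OF JJ_fin iv Yint])
  also have "\<dots> \<ge> (\<Prod>x\<in>JJ s. pmin)"
  proof (intro prod_mono conjI)
    fix x assume "x \<in> JJ s"
    then have "x \<in> II" using JJ_II by blast
    then show "pmin \<le> (\<integral>\<omega>. Y x \<omega> \<partial>M)" unfolding Y_def by (rule entry_prob)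
  qed (use pmin in auto)
  finally show ?thesis unfolding eta_def by (simp add: JJ_card)
qed


definition "gam = 2 * cc ^ Lw"

lemma gam_eta: "0 < gam" "gam \<le> 1" "0 < eta" "eta \<le> 1"
proof -
  have cc: "0 < cc" "cc \<le> 1/3" unfolding cc_def using n2 by (auto simp: field_simps)
  have "cc ^ Lw \<le> cc ^ 1" using cc Lw_pos by (intro power_decreasing) auto
  then show "0 < gam" "gam \<le> 1" unfolding gam_def using cc by auto
  show "0 < eta" "eta \<le> 1" unfolding eta_def using pmin by (auto intro: power_le_one)
qed

lemma idx_JJ_disj: "idx s \<inter> JJ s = {}" unfolding idx_def JJ_def by auto

lemma HBrr_meas[measurable]: "(\<lambda>\<omega>. HB s (rr (JJ s) \<omega>)) \<in> borel_measurable M"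
  using measurable_comp[OF rr_meas[OF JJ_II] HB_meas] by (simp add: comp_def)

lemma HB_int': "integrable M (\<lambda>\<omega>. HB s (rr (JJ s) \<omega>))"
proof (rule int_bound[where B=1])
  show "AE \<omega> in M. \<bar>HB s (rr (JJ s) \<omega>)\<bar> \<le> 1" by (simp add: HB_ind)
qed simp

lemma step_decay: "(\<integral>\<omega>. V (s + Lw) \<omega> \<partial>M) \<le> (1 - gam * eta) * (\<integral>\<omega>. V s \<omega> \<partial>M)"
proof -
  let ?H = "\<lambda>\<omega>. HB s (rr (JJ s) \<omega>)"
  have iv: "indep_var borel (V s) borel ?H"
    using indep_fg[OF idx_JJ_disj idx_II JJ_II GV_meas HB_meas] by (simp add: V_GV[symmetric])
  have prod: "(\<integral>\<omega>. V s \<omega> * ?H \<omega> \<partial>M) = (\<integral>\<omega>. V s \<omega> \<partial>M) * (\<integral>\<omega>. ?H \<omega> \<partial>M)"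
    by (rule indep_var_lebesgue_integral[OF iv V_int HB_int'])
  have pint: "integrable M (\<lambda>\<omega>. V s \<omega> * ?H \<omega>)"
    by (rule indep_var_integrable[OF iv V_int HB_int'])
  have ae: "AE \<omega> in M. V (s + Lw) \<omega> \<le> V s \<omega> - gam * (V s \<omega> * ?H \<omega>)"
    using AE_Gd
  proof (rule eventually_mono)
    fix \<omega> assume G: "\<omega> \<in> Gd"
    show "V (s + Lw) \<omega> \<le> V s \<omega> - gam * (V s \<omega> * ?H \<omega>)"
    proof (cases "\<omega> \<in> Bw s")
      case True
      then show ?thesis using window_contract[OF G True] by (simp add: HB_ind gam_def algebra_simps)
    next
      case False
      then show ?thesis using V_antimono[OF G, of s "s + Lw"] by (simp add: HB_ind)
    qed
  qed
  have "(\<integral>\<omega>. V (s + Lw) \<omega> \<partial>M) \<le> (\<integral>\<omega>. V s \<omega> - gam * (V s \<omega> * ?H \<omega>) \<partial>M)"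
    using ae V_int pint by (intro integral_mono_AE) auto
  also have "\<dots> = (\<integral>\<omega>. V s \<omega> \<partial>M) - gam * ((\<integral>\<omega>. V s \<omega> \<partial>M) * (\<integral>\<omega>. ?H \<omega> \<partial>M))"
    using V_int pint by (simp add: prod)
  also have "\<dots> \<le> (\<integral>\<omega>. V s \<omega> \<partial>M) - gam * ((\<integral>\<omega>. V s \<omega> \<partial>M) * eta)"
  proof -
    have "0 \<le> (\<integral>\<omega>. V s \<omega> \<partial>M)" by (intro Bochner_Integration.integral_nonneg) (simp add: V_nn)
    then have "(\<integral>\<omega>. V s \<omega> \<partial>M) * eta \<le> (\<integral>\<omega>. V s \<omega> \<partial>M) * (\<integral>\<omega>. ?H \<omega> \<partial>M)"
      using HB_int by (intro mult_left_mono) auto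
    then show ?thesis using gam_eta by (auto intro: mult_left_mono)
  qed
  finally show ?thesis by (simp add: algebra_simps)
qed

lemma decay: "(\<integral>\<omega>. V (m * Lw) \<omega> \<partial>M) \<le> (1 - gam * eta) ^ m * (\<integral>\<omega>. V 0 \<omega> \<partial>M)"
proof (induction m)
  case 0 then show ?case by simp
next
  case (Suc m)
  have r: "0 \<le> 1 - gam * eta" using gam_eta by (simp add: mult_le_one)
  have "(\<integral>\<omega>. V (Suc m * Lw) \<omega> \<partial>M) \<le> (1 - gam * eta) * (\<integral>\<omega>. V (m * Lw) \<omega> \<partial>M)"
    using step_decay[of "m * Lw"] by (simp add: add.commute)
  also have "\<dots> \<le> (1 - gam * eta) * ((1 - gam * eta) ^ m * (\<integral>\<omega>. V 0 \<omega> \<partial>M))"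
    using Suc r by (intro mult_left_mono) auto
  finally show ?case by simp
qed

lemma eV_lim: "(\<lambda>m. \<integral>\<omega>. V (m * Lw) \<omega> \<partial>M) \<longlonglongrightarrow> 0"
proof (rule tendsto_sandwich[of "\<lambda>_. 0" _ _ "\<lambda>m. (1 - gam * eta) ^ m * (\<integral>\<omega>. V 0 \<omega> \<partial>M)"])
  show "\<forall>\<^sub>F m in sequentially. 0 \<le> (\<integral>\<omega>. V (m * Lw) \<omega> \<partial>M)"
    by (intro always_eventually allI Bochner_Integration.integral_nonneg) (simp add: V_nn)
  show "\<forall>\<^sub>F m in sequentially. (\<integral>\<omega>. V (m * Lw) \<omega> \<partial>M) \<le> (1 - gam * eta) ^ m * (\<integral>\<omega>. V 0 \<omega> \<partial>M)"
    by (intro always_eventually allI decay)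
  have "gam * eta \<le> 1" using gam_eta by (intro mult_le_one) auto
  moreover have "0 < gam * eta" using gam_eta by simp
  ultimately have "\<bar>1 - gam * eta\<bar> < 1" by (simp add: abs_if)
  then show "(\<lambda>m. (1 - gam * eta) ^ m * (\<integral>\<omega>. V 0 \<omega> \<partial>M)) \<longlonglongrightarrow> 0"
    by (intro tendsto_mult_left_zero LIMSEQ_power_zero) simp
qed simp

lemma Z_null:
  assumes e: "0 < e"
  shows "AE \<omega> in M. \<not> (\<forall>k. e \<le> V k \<omega>)"
proof -
  let ?Z = "{\<omega> \<in> space M. \<forall>k. e \<le> V k \<omega>}"
  have Zs: "?Z \<in> events" by measurable
  have le: "prob ?Z \<le> (\<integral>\<omega>. V (m * Lw) \<omega> \<partial>M) / e" for m
  proof -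
    have "prob ?Z \<le> prob {\<omega> \<in> space M. e \<le> V (m * Lw) \<omega>}"
      by (intro finite_measure_mono) auto
    also have "\<dots> \<le> (\<integral>\<omega>. V (m * Lw) \<omega> \<partial>M) / e"
      by (rule integral_Markov_inequality_measure[OF V_int _ _ e, where A="space M"]) (auto simp: V_nn)
    finally show ?thesis .
  qed
  have "(\<lambda>m. (\<integral>\<omega>. V (m * Lw) \<omega> \<partial>M) / e) \<longlonglongrightarrow> 0 / e"
    by (intro tendsto_divide eV_lim) (use e in auto)
  then have "prob ?Z \<le> 0 / e"
    by (rule LIMSEQ_le_const) (use le in blast)
  then have "prob ?Z = 0" using measure_nonneg[of M ?Z] by simp
  then have Zn: "?Z \<in> null_sets M" using Zs by (auto simp: emeasure_eq_measure)
  have "AE \<omega> in M. \<omega> \<notin> ?Z \<and> \<omega> \<in> space M" using AE_not_in[OF Zn] AE_space by (rule eventually_conj)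
  then show ?thesis by (rule eventually_mono) auto
qed

lemma AE_V0: "AE \<omega> in M. (\<lambda>k. V k \<omega>) \<longlonglongrightarrow> 0"
proof -
  have "AE \<omega> in M. \<forall>j::nat. \<not> (\<forall>k. 1 / real (Suc j) \<le> V k \<omega>)"
    by (intro AE_all_countable[THEN iffD2] allI Z_null) auto
  with AE_Gd show ?thesis
  proof (eventually_elim)
    case (elim \<omega>)
    show ?case
    proof (rule LIMSEQ_I)
      fix r :: real assume r: "0 < r"
      obtain j where j: "1 / real (Suc j) < r"
        using reals_Archimedean r by (metis inverse_eq_divide of_nat_Suc)
      obtain k where k: "V k \<omega> < 1 / real (Suc j)" using elim(2) by (meson not_le)
      have "norm (V m \<omega> - 0) < r" if "m \<ge> k" for m
      proof -
        have "V m \<omega> \<le> V k \<omega>" using V_antimono[OF elim(1) that] .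
        moreover have "0 \<le> V m \<omega>" by (rule V_nn)
        ultimately show ?thesis using k j by simp
      qed
      then show "\<exists>no. \<forall>m\<ge>no. norm (V m \<omega> - 0) < r" by blast
    qed
  qed
qed

end



context cons begin

definition "xs \<omega> = lim (\<lambda>k. cs k \<omega> 1)"

lemma xs_meas[measurable]: "xs \<in> borel_measurable M"
  unfolding xs_def using cs_meas[OF one_N] by measurable

lemma Mn0_le: "\<omega> \<in> Gd \<Longrightarrow> Mn 0 \<omega> \<le> Mn k \<omega>"
  by (induction k) (auto intro: order_trans Mn_mono)

lemma conv_good:
  assumes G: "\<omega> \<in> Gd" and V0: "(\<lambda>k. V k \<omega>) \<longlonglongrightarrow> 0"
  shows "\<forall>i\<in>N. (\<lambda>k. cs k \<omega> i) \<longlonglongrightarrow> xs \<omega>"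
proof -
  have dec: "decseq (\<lambda>k. Mx k \<omega>)" using Mx_mono[OF G] by (intro decseq_SucI) auto
  have lb: "\<forall>k. Mn 0 \<omega> \<le> Mx k \<omega>"
    using Mn0_le[OF G] Mn_le_cs[OF one_N] cs_le_Mx[OF one_N] by (meson order_trans)
  obtain L where L: "(\<lambda>k. Mx k \<omega>) \<longlonglongrightarrow> L"
    using decseq_convergent[OF dec lb] by blast
  have Mn: "(\<lambda>k. Mn k \<omega>) \<longlonglongrightarrow> L"
  proof -
    have "(\<lambda>k. Mx k \<omega> - V k \<omega>) \<longlonglongrightarrow> L - 0" by (intro tendsto_diff L V0)
    then show ?thesis by (simp add: V_def)
  qed
  have ci: "(\<lambda>k. cs k \<omega> i) \<longlonglongrightarrow> L" if "i \<in> N" for i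
    by (rule tendsto_sandwich[OF _ _ Mn L]) (auto intro!: always_eventually Mn_le_cs cs_le_Mx that)
  have "xs \<omega> = L" unfolding xs_def using ci[OF one_N] by (rule limI)
  then show ?thesis using ci by auto
qed

lemma AE_conv: "AE \<omega> in M. \<forall>i\<in>N. (\<lambda>k. cs k \<omega> i) \<longlonglongrightarrow> xs \<omega>"
proof -
  have "AE \<omega> in M. \<omega> \<in> Gd \<and> (\<lambda>k. V k \<omega>) \<longlonglongrightarrow> 0" using AE_Gd AE_V0 by (rule eventually_conj)
  then show ?thesis by (rule eventually_mono) (use conv_good in blast)
qed


definition "Nb v = {w \<in> N. E w v}"

lemma deg_Nb: "deg n E v = card (Nb v)" unfolding deg_def Nb_def ..

lemma indep_AT:
  assumes j: "j \<ge> 1" "v \<in> N" "w \<in> N" "S \<subseteq> N" "w \<notin> S"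
    and g[measurable]: "g \<in> borel_measurable borel"
  shows "indep_var borel (At j w v) borel (\<lambda>\<omega>. g (\<Sum>w'\<in>S. At j w' v \<omega>))"
proof -
  let ?A = "{(j, w, v)}" and ?B = "{j} \<times> S \<times> {v}"
  have d: "?A \<inter> ?B = {}" using j by auto
  have A: "?A \<subseteq> II" "?B \<subseteq> II" using j by auto
  have fin: "finite S" using j finite_subset by blast
  have F: "(\<lambda>h. h (j, w, v)) \<in> borel_measurable (PiM ?A (\<lambda>_. borel))" by measurable
  have G: "(\<lambda>h. g (\<Sum>w'\<in>S. h (j, w', v))) \<in> borel_measurable (PiM ?B (\<lambda>_. borel))"
    using fin by measurable
  have "indep_var borel (\<lambda>\<omega>. (\<lambda>h. h (j, w, v)) (rr ?A \<omega>)) borel (\<lambda>\<omega>. (\<lambda>h. g (\<Sum>w'\<in>S. h (j, w', v))) (rr ?B \<omega>))"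
    by (rule indep_fg[OF d A F G])
  moreover have "(\<lambda>\<omega>. (\<lambda>h. h (j, w, v)) (rr ?A \<omega>)) = At j w v" by (auto simp: rr_def)
  moreover have "(\<lambda>\<omega>. (\<lambda>h. g (\<Sum>w'\<in>S. h (j, w', v))) (rr ?B \<omega>)) = (\<lambda>\<omega>. g (\<Sum>w'\<in>S. At j w' v \<omega>))"
    by (auto simp: rr_def intro!: ext arg_cong[where f=g] sum.cong)
  ultimately show ?thesis by simp
qed

lemma EA:
  assumes "j \<ge> 1" "v \<in> N" "w \<in> N" "E w v"
  shows "integrable M (At j w v)" "(\<integral>\<omega>. At j w v \<omega> \<partial>M) = p v"
proof -
  show "integrable M (At j w v)"
    by (rule int_bound[where B=1]) (use assms in \<open>auto intro!: eventually_mono[OF AE_Gd] dest: GdD\<close>)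
  have "(\<integral>\<omega>. At j w v \<omega> \<partial>M) = (\<integral>\<omega>. indicator {\<omega> \<in> space M. At j w v \<omega> = 1} \<omega> \<partial>M)"
    by (rule integral_cong_AE) (use assms in \<open>auto intro!: eventually_mono[OF AE_Gd] dest: GdD simp: indicator_def\<close>)
  also have "\<dots> = prob {\<omega> \<in> space M. At j w v \<omega> = 1}"
  proof -
    have "{\<omega> \<in> space M. At j w v \<omega> = 1} \<in> events" using assms by measurable
    then show ?thesis by simp
  qed
  also have "\<dots> = p v" using dist_edge assms by (auto simp: adj_def)
  finally show "(\<integral>\<omega>. At j w v \<omega> \<partial>M) = p v" .
qed

lemma law:
  assumes j: "j \<ge> 1" "v \<in> N" and S: "S \<subseteq> Nb v"
  shows "\<forall>f. f \<in> borel_measurable borel \<longrightarrow> integrable M (\<lambda>\<omega>. f (\<Sum>w\<in>S. At j w v \<omega>)) \<and>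
           (\<integral>\<omega>. f (\<Sum>w\<in>S. At j w v \<omega>) \<partial>M) = Bin (card S) (p v) f"
proof -
  have fin: "finite S" using S unfolding Nb_def by (rule finite_subset) simp
  show ?thesis using fin S
  proof (induction S rule: finite_induct)
    case empty then show ?case by (simp add: Bin_0 prob_space)
  next
    case (insert w S)
    have wN: "w \<in> N" "E w v" using insert unfolding Nb_def by auto
    have SN: "S \<subseteq> N" using insert unfolding Nb_def by auto
    have SS: "S \<subseteq> Nb v" using insert by auto
    show ?case
    proof (intro allI impI)
      fix f :: "real \<Rightarrow> real" assume f[measurable]: "f \<in> borel_measurable borel"
      have f1[measurable]: "(\<lambda>x. f (x + 1)) \<in> borel_measurable borel" by measurable
      let ?T = "\<lambda>\<omega>. \<Sum>w'\<in>S. At j w' v \<omega>"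
      have Tm[measurable]: "?T \<in> borel_measurable M"
        by (intro borel_measurable_sum) (use SN j in \<open>auto intro!: At_meas\<close>)
      have Am[measurable]: "At j w v \<in> borel_measurable M" using j wN by measurable
      note IH1 = insert.IH[OF SS, rule_format, OF f1] and IH0 = insert.IH[OF SS, rule_format, OF f]
      from IH1 IH0 have
        I1: "integrable M (\<lambda>\<omega>. f (?T \<omega> + 1))" "(\<integral>\<omega>. f (?T \<omega> + 1) \<partial>M) = Bin (card S) (p v) (\<lambda>x. f (x + 1))"
        and I0: "integrable M (\<lambda>\<omega>. f (?T \<omega>))" "(\<integral>\<omega>. f (?T \<omega>) \<partial>M) = Bin (card S) (p v) f"
        by auto
      note EAw = EA[OF j wN]
      have iv1: "indep_var borel (At j w v) borel (\<lambda>\<omega>. f (?T \<omega> + 1))"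
        using indep_AT[OF j wN(1) SN insert(2) f1] .
      have iv0: "indep_var borel (At j w v) borel (\<lambda>\<omega>. f (?T \<omega>))"
        using indep_AT[OF j wN(1) SN insert(2) f] .
      have p1: "integrable M (\<lambda>\<omega>. At j w v \<omega> * f (?T \<omega> + 1))" "(\<integral>\<omega>. At j w v \<omega> * f (?T \<omega> + 1) \<partial>M) = p v * Bin (card S) (p v) (\<lambda>x. f (x + 1))"
        using indep_var_integrable[OF iv1 EAw(1) I1(1)] indep_var_lebesgue_integral[OF iv1 EAw(1) I1(1)] I1(2) EAw(2) by auto
      have p0: "integrable M (\<lambda>\<omega>. At j w v \<omega> * f (?T \<omega>))" "(\<integral>\<omega>. At j w v \<omega> * f (?T \<omega>) \<partial>M) = p v * Bin (card S) (p v) f"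
        using indep_var_integrable[OF iv0 EAw(1) I0(1)] indep_var_lebesgue_integral[OF iv0 EAw(1) I0(1)] I0(2) EAw(2) by auto
      let ?G = "\<lambda>\<omega>. At j w v \<omega> * f (?T \<omega> + 1) + f (?T \<omega>) - At j w v \<omega> * f (?T \<omega>)"
      have ae: "AE \<omega> in M. f (\<Sum>w'\<in>insert w S. At j w' v \<omega>) = ?G \<omega>"
      proof (rule eventually_mono[OF AE_Gd])
        fix \<omega> assume G: "\<omega> \<in> Gd"
        have "At j w v \<omega> = 0 \<or> At j w v \<omega> = 1" using GdD[OF G j(1) wN(1) j(2)] by blast
        then show "f (\<Sum>w'\<in>insert w S. At j w' v \<omega>) = ?G \<omega>"
          using insert(1,2) by (auto simp: add.commute)
      qed
      have Gint: "integrable M ?G" using p1(1) p0(1) I0(1) by auto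
      have "(\<lambda>\<omega>. \<Sum>w'\<in>insert w S. At j w' v \<omega>) \<in> borel_measurable M"
        by (intro borel_measurable_sum) (use SN j wN in \<open>auto intro!: At_meas\<close>)
      then have m: "(\<lambda>\<omega>. f (\<Sum>w'\<in>insert w S. At j w' v \<omega>)) \<in> borel_measurable M"
        by measurable
      have "integrable M (\<lambda>\<omega>. f (\<Sum>w'\<in>insert w S. At j w' v \<omega>))"
        using integrable_cong_AE[OF m _ ae] Gint by simp
      moreover have "(\<integral>\<omega>. f (\<Sum>w'\<in>insert w S. At j w' v \<omega>) \<partial>M) = (\<integral>\<omega>. ?G \<omega> \<partial>M)"
        using integral_cong_AE[OF m _ ae] by simp
      moreover have "(\<integral>\<omega>. ?G \<omega> \<partial>M) = Bin (card (insert w S)) (p v) f"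
        using p1 p0 I0 insert(1,2) by (simp add: Bin_Suc algebra_simps)
      ultimately show "integrable M (\<lambda>\<omega>. f (\<Sum>w'\<in>insert w S. At j w' v \<omega>)) \<and>
           (\<integral>\<omega>. f (\<Sum>w'\<in>insert w S. At j w' v \<omega>) \<partial>M) = Bin (card (insert w S)) (p v) f" by simp
    qed
  qed
qed

end



context cons begin

lemma W_meas[measurable]:
  assumes "j \<ge> 1" "v \<in> N" "u \<in> N"
  shows "(\<lambda>\<omega>. Wmat n At j \<omega> v u) \<in> borel_measurable M"
  unfolding Wmat_def rand_deg_def
  by (intro borel_measurable_divide borel_measurable_add borel_measurable_sum borel_measurable_const At_meas)
     (use assms in auto)

lemma W_le1:
  assumes "\<omega> \<in> Gd" "j \<ge> 1" "v \<in> N" "u \<in> N"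
  shows "Wmat n At j \<omega> v u \<le> 1"
proof -
  have "Wmat n At j \<omega> v u \<le> (\<Sum>u'\<in>N. Wmat n At j \<omega> v u')"
    using assms W_nn[OF assms(1,2,3)] by (intro member_le_sum) auto
  then show ?thesis using W_sum[OF assms(1-3)] by simp
qed

lemma W_int: "j \<ge> 1 \<Longrightarrow> v \<in> N \<Longrightarrow> u \<in> N \<Longrightarrow> integrable M (\<lambda>\<omega>. Wmat n At j \<omega> v u)"
  by (rule int_bound[where B=1]) (auto intro!: eventually_mono[OF AE_Gd] simp: W_meas W_le1 W_nn abs_le_iff dest: W_nn W_le1)

definition "g1 = (\<lambda>x::real. 1 / (x + 1))"
definition "g2 = (\<lambda>x::real. 1 / (x + 2))"

lemma g_meas[measurable]: "g1 \<in> borel_measurable borel" "g2 \<in> borel_measurable borel"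
  unfolding g1_def g2_def by measurable

definition "ew v u = (if u = v then Bin (deg n E v) (p v) g1
   else if E u v then p v * Bin (deg n E v - 1) (p v) g2 else 0)"

lemma rd_Nb: "\<omega> \<in> Gd \<Longrightarrow> j \<ge> 1 \<Longrightarrow> v \<in> N \<Longrightarrow> rand_deg n At j \<omega> v = (\<Sum>w\<in>Nb v. At j w v \<omega>)"
  unfolding rand_deg_def Nb_def
proof (rule sum.mono_neutral_right)
  assume G: "\<omega> \<in> Gd" "j \<ge> 1" "v \<in> N"
  show "\<forall>i\<in>N - {w \<in> N. E w v}. At j i v \<omega> = 0"
    using GdD[OF G(1,2) _ G(3)] by auto
qed auto

lemma EW:
  assumes j: "j \<ge> 1" "v \<in> N" "u \<in> N"
  shows "(\<integral>\<omega>. Wmat n At j \<omega> v u \<partial>M) = ew v u"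
proof -
  have NbN: "Nb v \<subseteq> N" unfolding Nb_def by auto
  have cardNb: "card (Nb v) = deg n E v" by (simp add: deg_Nb)
  have sm: "\<And>S. S \<subseteq> N \<Longrightarrow> (\<lambda>\<omega>. \<Sum>w\<in>S. At j w v \<omega>) \<in> borel_measurable M"
    by (intro borel_measurable_sum) (use j in \<open>auto intro!: At_meas\<close>)
  show ?thesis
  proof (cases "u = v")
    case True
    have ae: "AE \<omega> in M. Wmat n At j \<omega> v u = g1 (\<Sum>w\<in>Nb v. At j w v \<omega>)"
      by (rule eventually_mono[OF AE_Gd]) (use j True in \<open>auto simp: Wmat_def g1_def rd_Nb At_diag\<close>)
    have "(\<integral>\<omega>. Wmat n At j \<omega> v u \<partial>M) = (\<integral>\<omega>. g1 (\<Sum>w\<in>Nb v. At j w v \<omega>) \<partial>M)"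
      by (rule integral_cong_AE[OF _ _ ae]) (use j sm[OF NbN] in auto)
    also have "\<dots> = Bin (deg n E v) (p v) g1"
      using law[OF j(1,2) order.refl] g_meas cardNb by auto
    finally show ?thesis using True by (simp add: ew_def)
  next
    case uv: False
    show ?thesis
    proof (cases "E u v")
      case True
      let ?R = "Nb v - {u}"
      have uNb: "u \<in> Nb v" using True j unfolding Nb_def by auto
      have RN: "?R \<subseteq> N" using NbN by auto
      have ae: "AE \<omega> in M. Wmat n At j \<omega> v u = At j u v \<omega> * g2 (\<Sum>w\<in>?R. At j w v \<omega>)"
      proof (rule eventually_mono[OF AE_Gd])
        fix \<omega> assume G: "\<omega> \<in> Gd"
        have rd: "rand_deg n At j \<omega> v = At j u v \<omega> + (\<Sum>w\<in>?R. At j w v \<omega>)"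
          using rd_Nb[OF G j(1,2)] sum.remove[OF finite_subset[OF NbN] uNb] by simp
        have "At j u v \<omega> = 0 \<or> At j u v \<omega> = 1" using GdD[OF G j(1,3,2)] by blast
        then show "Wmat n At j \<omega> v u = At j u v \<omega> * g2 (\<Sum>w\<in>?R. At j w v \<omega>)"
          using uv rd by (auto simp: Wmat_def g2_def add.commute)
      qed
      have "(\<integral>\<omega>. Wmat n At j \<omega> v u \<partial>M) = (\<integral>\<omega>. At j u v \<omega> * g2 (\<Sum>w\<in>?R. At j w v \<omega>) \<partial>M)"
        by (rule integral_cong_AE[OF _ _ ae]) (use j sm[OF RN] in auto)
      also have "\<dots> = (\<integral>\<omega>. At j u v \<omega> \<partial>M) * (\<integral>\<omega>. g2 (\<Sum>w\<in>?R. At j w v \<omega>) \<partial>M)"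
        using indep_var_lebesgue_integral[OF indep_AT[OF j(1,2,3) RN _ g_meas(2)] EA(1)[OF j(1,2,3) True]]
          law[OF j(1,2), of ?R] g_meas by auto
      also have "\<dots> = p v * Bin (deg n E v - 1) (p v) g2"
        using EA(2)[OF j(1,2,3) True] law[OF j(1,2), of ?R] g_meas uNb cardNb by (auto simp: card_Diff_singleton)
      finally show ?thesis using uv True by (simp add: ew_def)
    next
      case False
      have ae: "AE \<omega> in M. Wmat n At j \<omega> v u = 0"
        by (rule eventually_mono[OF AE_Gd]) (use j False uv in \<open>auto simp: Wmat_def dest: GdD\<close>)
      have "(\<integral>\<omega>. Wmat n At j \<omega> v u \<partial>M) = (\<integral>\<omega>. 0 \<partial>M)"
        by (rule integral_cong_AE[OF _ _ ae]) (use j in auto)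
      then show ?thesis using uv False by (simp add: ew_def)
    qed
  qed
qed


lemma rowsum: assumes v: "v \<in> N" shows "(\<Sum>u\<in>N. ew v u) = 1"
proof -
  have "(\<Sum>u\<in>N. ew v u) = (\<Sum>u\<in>N. \<integral>\<omega>. Wmat n At 1 \<omega> v u \<partial>M)"
    using EW[of 1 v] v by auto
  also have "\<dots> = (\<integral>\<omega>. (\<Sum>u\<in>N. Wmat n At 1 \<omega> v u) \<partial>M)"
    by (rule Bochner_Integration.integral_sum[symmetric]) (use v W_int in auto)
  also have "\<dots> = (\<integral>\<omega>. 1 \<partial>M)"
  proof (rule integral_cong_AE)
    show "(\<lambda>\<omega>. \<Sum>u\<in>N. Wmat n At 1 \<omega> v u) \<in> borel_measurable M"
      by (intro borel_measurable_sum) (use v W_meas in auto)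
    show "AE \<omega> in M. (\<Sum>u\<in>N. Wmat n At 1 \<omega> v u) = 1"
      by (rule eventually_mono[OF AE_Gd]) (use W_sum[of _ 1 v] v in auto)
  qed simp
  finally show ?thesis by (simp add: prob_space)
qed

lemma rowsum_explicit:
  assumes v: "v \<in> N"
  shows "(\<Sum>u\<in>N. ew v u) = Bin (deg n E v) (p v) g1 + real (deg n E v) * (p v * Bin (deg n E v - 1) (p v) g2)"
proof -
  have "(\<Sum>u\<in>N. ew v u) = ew v v + (\<Sum>u\<in>N - {v}. ew v u)"
    using v by (simp add: sum.remove)
  also have "(\<Sum>u\<in>N - {v}. ew v u) = (\<Sum>u\<in>N - {v}. if E u v then p v * Bin (deg n E v - 1) (p v) g2 else 0)"
    by (intro sum.cong) (auto simp: ew_def)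
  also have "\<dots> = (\<Sum>u\<in>{u \<in> N - {v}. E u v}. p v * Bin (deg n E v - 1) (p v) g2)"
    by (rule sum.inter_filter[symmetric]) simp
  also have "{u \<in> N - {v}. E u v} = Nb v" unfolding Nb_def using noloop by auto
  finally show ?thesis by (simp add: ew_def deg_Nb)
qed

lemma den_pos:
  assumes v: "v \<in> N"
  shows "0 < p v * (real (deg n E v) + 1) - 1 + (1 - p v) ^ (deg n E v + 1)"
proof -
  let ?q = "p v" and ?d = "deg n E v"
  have q: "0 < ?q" "?q < 1" using prange v by auto
  have d: "?d \<ge> 1" using degpos v by auto
  have "1 + real ?d * (- ?q) \<le> (1 + - ?q) ^ ?d" using q by (intro Bernoulli_inequality) auto
  then have b: "1 - real ?d * ?q \<le> (1 - ?q) ^ ?d" by simp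
  have "(1 - real ?d * ?q) * (1 - ?q) \<le> (1 - ?q) ^ ?d * (1 - ?q)"
    using b q by (intro mult_right_mono) auto
  moreover have "real ?d * ?q * ?q > 0" using q d by auto
  ultimately show ?thesis by (simp add: algebra_simps)
qed

definition "piw v = rho n E p * weight n E p v"

lemma weight_eq: "weight n E p v = p v * (real (deg n E v) + 1) * real (deg n E v) / (p v * (real (deg n E v) + 1) - 1 + (1 - p v) ^ (deg n E v + 1))"
  unfolding weight_def Let_def ..

lemma weight_pos: assumes v: "v \<in> N" shows "0 < weight n E p v"
proof -
  have "deg n E v \<ge> 1" using degpos v by auto
  moreover have "0 < p v" using prange v by auto
  ultimately show ?thesis
    unfolding weight_eq using den_pos[OF v] by (intro divide_pos_pos mult_pos_pos) auto
qed

lemma sumw_pos: "0 < (\<Sum>i\<in>N. weight n E p i)"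
  using weight_pos N_ne by (intro sum_pos) auto

lemma piw_sum: "(\<Sum>v\<in>N. piw v) = 1"
proof -
  have "(\<Sum>v\<in>N. piw v) = rho n E p * (\<Sum>v\<in>N. weight n E p v)"
    unfolding piw_def by (simp add: sum_distrib_left)
  also have "\<dots> = 1" unfolding rho_def using sumw_pos by simp
  finally show ?thesis .
qed

lemma alg1:
  fixes q D d r :: real
  assumes "0 < q" "0 < D" "0 \<le> d"
  shows "r * (q * (d + 1) * d / D) * (D / ((d + 1) * q)) = r * d"
proof -
  have nz: "(d + 1) * q \<noteq> 0" "D \<noteq> 0" using assms by auto
  have "(q * (d + 1) * d / D) * (D / ((d + 1) * q)) = (d * ((d + 1) * q)) / ((d + 1) * q)"
    using nz by (simp add: ac_simps)
  also have "\<dots> = d" using nz by simp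
  finally have "(q * (d + 1) * d / D) * (D / ((d + 1) * q)) = d" .
  then show ?thesis by (metis mult.assoc)
qed

lemma K2:
  assumes v: "v \<in> N"
  shows "piw v * (1 - Bin (deg n E v) (p v) g1) = rho n E p * real (deg n E v)"
proof -
  let ?q = "p v" and ?d = "deg n E v"
  define den where "den = ?q * (real ?d + 1) - 1 + (1 - ?q) ^ (?d + 1)"
  have q: "0 < ?q" using prange v by auto
  have den: "0 < den" using den_pos[OF v] unfolding den_def .
  have nz: "(real ?d + 1) * ?q \<noteq> 0" using q by auto
  have B: "Bin ?d ?q g1 = (1 - (1 - ?q) ^ (?d + 1)) / ((real ?d + 1) * ?q)"
    unfolding g1_def using Bin_g1[OF q] .
  have "1 - Bin ?d ?q g1 = ((real ?d + 1) * ?q - (1 - (1 - ?q) ^ (?d + 1))) / ((real ?d + 1) * ?q)"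
    unfolding B using nz by (simp add: diff_divide_distrib)
  also have "(real ?d + 1) * ?q - (1 - (1 - ?q) ^ (?d + 1)) = den"
    unfolding den_def by (simp add: algebra_simps)
  finally have e: "1 - Bin ?d ?q g1 = den / ((real ?d + 1) * ?q)" .
  have w: "weight n E p v = ?q * (real ?d + 1) * real ?d / den" unfolding weight_eq den_def ..
  show ?thesis unfolding e piw_def w by (rule alg1[OF q den]) simp
qed

lemma K1:
  assumes v: "v \<in> N"
  shows "piw v * (p v * Bin (deg n E v - 1) (p v) g2) = rho n E p"
proof -
  have "deg n E v \<ge> 1" using degpos v by auto
  then have d: "real (deg n E v) > 0" by simp
  have "real (deg n E v) * (p v * Bin (deg n E v - 1) (p v) g2) = 1 - Bin (deg n E v) (p v) g1"
    using rowsum[OF v] rowsum_explicit[OF v] by simp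
  then have "piw v * (real (deg n E v) * (p v * Bin (deg n E v - 1) (p v) g2)) = rho n E p * real (deg n E v)"
    using K2[OF v] by simp
  then show ?thesis using d by (simp add: algebra_simps)
qed

lemma stationary:
  assumes u: "u \<in> N"
  shows "(\<Sum>v\<in>N. piw v * ew v u) = piw u"
proof -
  have "(\<Sum>v\<in>N. piw v * ew v u) = piw u * ew u u + (\<Sum>v\<in>N - {u}. piw v * ew v u)"
    using u by (simp add: sum.remove)
  also have "(\<Sum>v\<in>N - {u}. piw v * ew v u) = (\<Sum>v\<in>N - {u}. if E u v then rho n E p else 0)"
  proof (intro sum.cong refl)
    fix x assume "x \<in> N - {u}"
    then show "piw x * ew x u = (if E u x then rho n E p else 0)"
      using K1[of x] sym u by (auto simp: ew_def)
  qed
  also have "\<dots> = (\<Sum>v\<in>{v \<in> N - {u}. E u v}. rho n E p)"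
    by (rule sum.inter_filter[symmetric]) simp
  also have "{v \<in> N - {u}. E u v} = Nb u" unfolding Nb_def using noloop sym u by auto
  finally have "(\<Sum>v\<in>N. piw v * ew v u) = piw u * Bin (deg n E u) (p u) g1 + rho n E p * real (deg n E u)"
    by (simp add: ew_def deg_Nb)
  also have "\<dots> = piw u" using K2[OF u] by (simp add: algebra_simps)
  finally show ?thesis .
qed

end



context cons begin

definition "TT j = {j} \<times> N \<times> N"

lemma TT_II: "j \<ge> 1 \<Longrightarrow> TT j \<subseteq> II" unfolding TT_def by auto

lemma W_rr:
  assumes "v \<in> N" "u \<in> N"
  shows "Wmat n At j \<omega> v u = Wmat n (lift (rr (TT j) \<omega>)) j () v u"
  unfolding Wmat_def rand_deg_def lift_def rr_def TT_def using assms
  by (auto intro!: sum.cong arg_cong2[where f="(/)"])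

lemma W_lift_meas:
  assumes "v \<in> N" "u \<in> N"
  shows "(\<lambda>f. Wmat n (lift f) j () v u) \<in> borel_measurable (PiM (TT j) (\<lambda>_. borel))"
proof -
  have inK: "(j, w, v) \<in> TT j" if "w \<in> N" for w using that assms unfolding TT_def by auto
  show ?thesis
    unfolding Wmat_def rand_deg_def lift_def
    using inK assms by measurable
qed

lemma cs_int: assumes i: "i \<in> N" shows "integrable M (\<lambda>\<omega>. cs k \<omega> i)"
proof (rule int_bound[where B="\<Sum>j\<in>N. \<bar>x0 j\<bar>"])
  show "(\<lambda>\<omega>. cs k \<omega> i) \<in> borel_measurable M" using i by simp
  show "AE \<omega> in M. \<bar>cs k \<omega> i\<bar> \<le> (\<Sum>j\<in>N. \<bar>x0 j\<bar>)"
    by (rule eventually_mono[OF AE_Gd]) (rule cs_abs_bound[OF _ i])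
qed

lemma E_Wcs:
  assumes v: "v \<in> N" and u: "u \<in> N"
  shows "integrable M (\<lambda>\<omega>. Wmat n At (Suc k) \<omega> v u * cs k \<omega> u)"
    "(\<integral>\<omega>. Wmat n At (Suc k) \<omega> v u * cs k \<omega> u \<partial>M) = ew v u * (\<integral>\<omega>. cs k \<omega> u \<partial>M)"
proof -
  have d: "TT (Suc k) \<inter> idx k = {}" unfolding TT_def idx_def by auto
  have iv0: "indep_var borel (\<lambda>\<omega>. Wmat n (lift (rr (TT (Suc k)) \<omega>)) (Suc k) () v u) borel
                (\<lambda>\<omega>. cstate n (lift (rr (idx k) \<omega>)) x0 k () u)"
    by (rule indep_fg[OF d TT_II idx_II W_lift_meas[OF v u] cstate_lift_meas[OF order.refl u]]) simp
  have iv: "indep_var borel (\<lambda>\<omega>. Wmat n At (Suc k) \<omega> v u) borel (\<lambda>\<omega>. cs k \<omega> u)"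
    using iv0 by (simp add: W_rr[OF v u, symmetric] cs_rr[OF order.refl u, symmetric])
  have Wi: "integrable M (\<lambda>\<omega>. Wmat n At (Suc k) \<omega> v u)" using W_int v u by simp
  show "integrable M (\<lambda>\<omega>. Wmat n At (Suc k) \<omega> v u * cs k \<omega> u)"
    by (rule indep_var_integrable[OF iv Wi cs_int[OF u]])
  show "(\<integral>\<omega>. Wmat n At (Suc k) \<omega> v u * cs k \<omega> u \<partial>M) = ew v u * (\<integral>\<omega>. cs k \<omega> u \<partial>M)"
    using indep_var_lebesgue_integral[OF iv Wi cs_int[OF u]] EW[of "Suc k" v u] v u by simp
qed

definition "Phi k = (\<Sum>v\<in>N. piw v * (\<integral>\<omega>. cs k \<omega> v \<partial>M))"

lemma E_cs_Suc:
  assumes v: "v \<in> N"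
  shows "(\<integral>\<omega>. cs (Suc k) \<omega> v \<partial>M) = (\<Sum>u\<in>N. ew v u * (\<integral>\<omega>. cs k \<omega> u \<partial>M))"
proof -
  have "(\<integral>\<omega>. cs (Suc k) \<omega> v \<partial>M) = (\<integral>\<omega>. (\<Sum>u\<in>N. Wmat n At (Suc k) \<omega> v u * cs k \<omega> u) \<partial>M)"
    by (simp add: cs_Suc)
  also have "\<dots> = (\<Sum>u\<in>N. \<integral>\<omega>. Wmat n At (Suc k) \<omega> v u * cs k \<omega> u \<partial>M)"
    by (rule Bochner_Integration.integral_sum) (use E_Wcs(1) v in auto)
  also have "\<dots> = (\<Sum>u\<in>N. ew v u * (\<integral>\<omega>. cs k \<omega> u \<partial>M))"
    by (intro sum.cong refl) (use E_Wcs(2) v in auto)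
  finally show ?thesis .
qed

lemma Phi_const: "Phi k = (\<Sum>v\<in>N. piw v * x0 v)"
proof (induction k)
  case 0 then show ?case by (simp add: Phi_def cs_0 prob_space)
next
  case (Suc k)
  have "Phi (Suc k) = (\<Sum>v\<in>N. piw v * (\<Sum>u\<in>N. ew v u * (\<integral>\<omega>. cs k \<omega> u \<partial>M)))"
    unfolding Phi_def by (intro sum.cong refl) (simp add: E_cs_Suc)
  also have "\<dots> = (\<Sum>u\<in>N. (\<Sum>v\<in>N. piw v * ew v u) * (\<integral>\<omega>. cs k \<omega> u \<partial>M))"
    by (simp add: sum_distrib_left sum_distrib_right mult.assoc) (rule sum.swap)
  also have "\<dots> = Phi k"
    unfolding Phi_def by (intro sum.cong refl) (use stationary in auto)
  finally show ?case using Suc by simp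
qed

lemma main:
  "\<exists>xs. xs \<in> borel_measurable M \<and>
           (AE \<omega> in M. \<forall>i\<in>{1..n}. (\<lambda>k. cstate n At x0 k \<omega> i) \<longlonglongrightarrow> xs \<omega>) \<and>
           integrable M xs \<and>
           (\<integral>\<omega>. xs \<omega> \<partial>M) = (\<Sum>i\<in>{1..n}. rho n E p * weight n E p i * x0 i)"
proof -
  define s where "s k \<omega> = (\<Sum>v\<in>N. piw v * cs k \<omega> v)" for k \<omega>
  define B where "B = (\<Sum>v\<in>N. \<bar>piw v\<bar>) * (\<Sum>j\<in>N. \<bar>x0 j\<bar>)"
  have sm: "s k \<in> borel_measurable M" for k
    unfolding s_def by (intro borel_measurable_sum borel_measurable_times borel_measurable_const) (auto intro: cs_meas)
  have lim: "AE \<omega> in M. (\<lambda>k. s k \<omega>) \<longlonglongrightarrow> xs \<omega>"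
  proof (rule eventually_mono[OF AE_conv])
    fix \<omega> assume c: "\<forall>i\<in>N. (\<lambda>k. cs k \<omega> i) \<longlonglongrightarrow> xs \<omega>"
    have "(\<lambda>k. s k \<omega>) \<longlonglongrightarrow> (\<Sum>v\<in>N. piw v * xs \<omega>)"
      unfolding s_def by (intro tendsto_sum tendsto_mult tendsto_const) (use c in auto)
    also have "(\<Sum>v\<in>N. piw v * xs \<omega>) = xs \<omega>" using piw_sum by (simp add: sum_distrib_right[symmetric])
    finally show "(\<lambda>k. s k \<omega>) \<longlonglongrightarrow> xs \<omega>" .
  qed
  have bnd: "AE \<omega> in M. norm (s k \<omega>) \<le> B" for k
  proof (rule eventually_mono[OF AE_Gd])
    fix \<omega> assume G: "\<omega> \<in> Gd"
    have "norm (s k \<omega>) \<le> (\<Sum>v\<in>N. \<bar>piw v\<bar> * \<bar>cs k \<omega> v\<bar>)"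
      unfolding s_def real_norm_def by (rule order.trans[OF sum_abs]) (simp add: abs_mult)
    also have "\<dots> \<le> (\<Sum>v\<in>N. \<bar>piw v\<bar> * (\<Sum>j\<in>N. \<bar>x0 j\<bar>))"
      by (intro sum_mono mult_left_mono cs_abs_bound[OF G]) auto
    also have "\<dots> = B" unfolding B_def by (simp add: sum_distrib_right)
    finally show "norm (s k \<omega>) \<le> B" .
  qed
  have wint: "integrable M (\<lambda>_. B)" by simp
  have xi: "integrable M xs"
    by (rule integrable_dominated_convergence[OF xs_meas sm wint lim bnd])
  have conv: "(\<lambda>k. \<integral>\<omega>. s k \<omega> \<partial>M) \<longlonglongrightarrow> (\<integral>\<omega>. xs \<omega> \<partial>M)"
    by (rule integral_dominated_convergence[OF xs_meas sm wint lim bnd])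
  have "(\<integral>\<omega>. s k \<omega> \<partial>M) = Phi k" for k
  proof -
    have "(\<integral>\<omega>. s k \<omega> \<partial>M) = (\<Sum>v\<in>N. \<integral>\<omega>. piw v * cs k \<omega> v \<partial>M)"
      unfolding s_def by (rule Bochner_Integration.integral_sum) (auto intro: cs_int)
    then show ?thesis unfolding Phi_def by simp
  qed
  then have "(\<lambda>k. \<integral>\<omega>. s k \<omega> \<partial>M) = (\<lambda>k. \<Sum>v\<in>N. piw v * x0 v)" by (simp add: Phi_const)
  with conv have "(\<integral>\<omega>. xs \<omega> \<partial>M) = (\<Sum>v\<in>N. piw v * x0 v)"
    using LIMSEQ_unique tendsto_const by metis
  then have "(\<integral>\<omega>. xs \<omega> \<partial>M) = (\<Sum>i\<in>{1..n}. rho n E p * weight n E p i * x0 i)"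
    by (simp add: piw_def)
  moreover have "AE \<omega> in M. \<forall>i\<in>{1..n}. (\<lambda>k. cstate n At x0 k \<omega> i) \<longlonglongrightarrow> xs \<omega>"
    using AE_conv by (simp add: cs_def)
  ultimately show ?thesis using xs_meas xi by blast
qed

end

theorem theorem1:
  fixes M :: "'a measure" and n :: nat and E :: "nat \<Rightarrow> nat \<Rightarrow> bool"
    and p :: "nat \<Rightarrow> real" and At :: "nat \<Rightarrow> nat \<Rightarrow> nat \<Rightarrow> 'a \<Rightarrow> real"
    and x0 :: "nat \<Rightarrow> real"
  assumes "prob_space M"
    and "n \<ge> 2"
    and sym: "\<forall>u\<in>{1..n}. \<forall>v\<in>{1..n}. E u v = E v u"
    and noloop: "\<forall>v. \<not> E v v"
    and conn: "connected_graph n E"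
    and degpos: "\<forall>v\<in>{1..n}. deg n E v \<ge> 1"
    and prange: "\<forall>v\<in>{1..n}. 0 < p v \<and> p v < 1"
    and indep: "prob_space.indep_vars M (\<lambda>_. borel) (\<lambda>(k, u, v). At k u v)
                  {(k, u, v). k \<ge> 1 \<and> u \<in> {1..n} \<and> v \<in> {1..n}}"
    and dist_edge: "\<forall>k\<ge>1. \<forall>u\<in>{1..n}. \<forall>v\<in>{1..n}. E u v \<longrightarrow>
                  measure M {\<omega> \<in> space M. At k u v \<omega> = adj E u v} = p v \<and>
                  measure M {\<omega> \<in> space M. At k u v \<omega> = 0} = 1 - p v"
    and dist_nonedge: "\<forall>k\<ge>1. \<forall>u\<in>{1..n}. \<forall>v\<in>{1..n}. \<not> E u v \<longrightarrow>
                  measure M {\<omega> \<in> space M. At k u v \<omega> = 0} = 1"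
  shows "\<exists>xs. xs \<in> borel_measurable M \<and>
           (AE \<omega> in M. \<forall>i\<in>{1..n}. (\<lambda>k. cstate n At x0 k \<omega> i) \<longlonglongrightarrow> xs \<omega>) \<and>
           integrable M xs \<and>
           (\<integral>\<omega>. xs \<omega> \<partial>M) = (\<Sum>i\<in>{1..n}. rho n E p * weight n E p i * x0 i)"
  proof -
  have "cons M n E p At"
    unfolding cons_def cons_axioms_def using assms by auto
  then show ?thesis by (rule cons.main)
qed

end
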